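(* Let $(G,\omega)$ be a weighted digraph without loops, and suppose $G$ has $b$ reciprocal pairs of edges $\{(u_i,v_i),(v_i,u_i)\}$, $i=1,\dots,b$, with weights $w(i)=\omega((u_i,v_i))$ and $w'(i)=\omega((v_i,u_i))$. Let $\Phi(A,t):=I+tL^T\sqrt Z\,(I-tV)^{-1}\sqrt Z\,R$. Then, as rational functions of $t$, \[\det\Phi(A,t)=\frac{\prod_{i=1}^b\bigl(1-t^2w(i)w'(i)\bigr)}{\det(I-tV)}.\]
   Context: $G=(V(G),E)$ with $n$ vertices and $m$ edges, $\omega:E\to(0,\infty)$. Source matrix $L\in\{0,1\}^{m\times n}$: $L_{ej}=1$ iff $e=(j,\cdot)$; target matrix $R\in\{0,1\}^{m\times n}$: $R_{ej}=1$ iff $e=(\cdot,j)$. $Z$ is the $m\times m$ diagonal matrix with $Z_{ee}=\omega(e)$, and $\sqrt Z$ its entrywise square root. $V$ is the $m\times m$ matrix with $V_{ef}=\sqrt{\omega(e)\omega(f)}$ if $e=(i,j)$, $f=(j,k)$ with $k\ne i$, and $V_{ef}=0$ otherwise. *)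

theory Defs
  imports Complex_Main "Jordan_Normal_Form.Gauss_Jordan_Elimination" "Jordan_Normal_Form.Determinant"
begin

text \<open>A weighted digraph on the vertex set {0..<n}: its edges are given by a list es
  of distinct pairs (i,j) (an edge from i to j), the position of an edge in the list
  being its index e in {0..<m}, m = length es.\<close>

definition wdigraph :: "nat \<Rightarrow> (nat \<times> nat) list \<Rightarrow> (nat \<times> nat \<Rightarrow> real) \<Rightarrow> bool" where
  "wdigraph n es w \<longleftrightarrow> distinct es \<and> (\<forall>(i,j)\<in>set es. i < n \<and> j < n) \<and> (\<forall>e\<in>set es. w e > 0)"

definition loopless :: "(nat \<times> nat) list \<Rightarrow> bool" where
  "loopless es \<longleftrightarrow> (\<forall>(i,j)\<in>set es. i \<noteq> j)"

definition src_mat :: "nat \<Rightarrow> (nat \<times> nat) list \<Rightarrow> real mat" where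
  "src_mat n es = mat (length es) n (\<lambda>(e,j). if fst (es ! e) = j then 1 else 0)"

definition tgt_mat :: "nat \<Rightarrow> (nat \<times> nat) list \<Rightarrow> real mat" where
  "tgt_mat n es = mat (length es) n (\<lambda>(e,j). if snd (es ! e) = j then 1 else 0)"

definition weight_mat :: "(nat \<times> nat) list \<Rightarrow> (nat \<times> nat \<Rightarrow> real) \<Rightarrow> real mat" where
  "weight_mat es w = mat (length es) (length es) (\<lambda>(e,f). if e = f then w (es ! e) else 0)"

definition sqrt_weight_mat :: "(nat \<times> nat) list \<Rightarrow> (nat \<times> nat \<Rightarrow> real) \<Rightarrow> real mat" where
  "sqrt_weight_mat es w = map_mat sqrt (weight_mat es w)"

definition nb_mat :: "(nat \<times> nat) list \<Rightarrow> (nat \<times> nat \<Rightarrow> real) \<Rightarrow> real mat" where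
  "nb_mat es w = mat (length es) (length es) (\<lambda>(e,f).
     if snd (es ! e) = fst (es ! f) \<and> snd (es ! f) \<noteq> fst (es ! e)
     then sqrt (w (es ! e) * w (es ! f)) else 0)"

text \<open>Phi(t) = I + t L^T sqrt Z (I - tV)^{-1} sqrt Z R (meaningful when I - tV is invertible).\<close>
definition Phi_mat :: "nat \<Rightarrow> (nat \<times> nat) list \<Rightarrow> (nat \<times> nat \<Rightarrow> real) \<Rightarrow> real \<Rightarrow> real mat" where
  "Phi_mat n es w t = 1\<^sub>m n + t \<cdot>\<^sub>m (transpose_mat (src_mat n es) * sqrt_weight_mat es w
      * the (mat_inverse (1\<^sub>m (length es) - t \<cdot>\<^sub>m nb_mat es w)) * sqrt_weight_mat es w * tgt_mat n es)"

definition recip_pairs :: "(nat \<times> nat) list \<Rightarrow> (nat \<times> nat) set" where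
  "recip_pairs es = {(u,v). (u,v) \<in> set es \<and> (v,u) \<in> set es \<and> u < v}"

end

theory Submission
  imports Defs
begin




lemma sylvester_det:
  fixes A B :: "real mat"
  assumes A: "A \<in> carrier_mat n m" and B: "B \<in> carrier_mat m n"
  shows "det (1\<^sub>m n + A * B) = det (1\<^sub>m m + B * A)"
proof -
  define M2 where "M2 = four_block_mat (1\<^sub>m n) (-A) B (1\<^sub>m m)"
  have "four_block_mat (1\<^sub>m n) A (0\<^sub>m m n) (1\<^sub>m m) * M2 = four_block_mat (1\<^sub>m n + A * B) (0\<^sub>m n m) B (1\<^sub>m m)"
    unfolding M2_def
    apply (subst mult_four_block_mat)
    using A B by (auto)
  then have "det (four_block_mat (1\<^sub>m n) A (0\<^sub>m m n) (1\<^sub>m m)) * det M2 = det (1\<^sub>m n + A * B)"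
    apply (subst det_mult[symmetric, of _ "n+m"])
    using A B by (auto simp: M2_def det_four_block_mat_upper_right_zero[of _ n _ m])
  moreover have "det (four_block_mat (1\<^sub>m n) A (0\<^sub>m m n) (1\<^sub>m m)) = 1"
    using A by (subst det_four_block_mat_lower_left_zero[of _ n _ m], auto)
  moreover have "four_block_mat (1\<^sub>m n) (0\<^sub>m n m) (-B) (1\<^sub>m m) * M2 = four_block_mat (1\<^sub>m n) (-A) (0\<^sub>m m n) (1\<^sub>m m + B * A)"
    unfolding M2_def
    apply (subst mult_four_block_mat)
    using A B by (auto)
  then have "det (four_block_mat (1\<^sub>m n) (0\<^sub>m n m) (-B) (1\<^sub>m m)) * det M2 = det (1\<^sub>m m + B * A)"
    apply (subst det_mult[symmetric, of _ "n+m"])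
    using A B by (auto simp: M2_def det_four_block_mat_lower_left_zero[of _ n _ m])
  moreover have "det (four_block_mat (1\<^sub>m n) (0\<^sub>m n m) (-B) (1\<^sub>m m)) = 1"
    using B by (subst det_four_block_mat_upper_right_zero[of _ n _ m], auto)
  ultimately show ?thesis by simp
qed

definition diagm :: "nat \<Rightarrow> (nat \<Rightarrow> real) \<Rightarrow> real mat" where
  "diagm k d = mat k k (\<lambda>(i,j). if i = j then d i else 0)"

lemma diagm_simps[simp]: "dim_row (diagm k d) = k" "dim_col (diagm k d) = k"
  "i < k \<Longrightarrow> j < k \<Longrightarrow> diagm k d $$ (i,j) = (if i = j then d i else 0)"
  unfolding diagm_def by auto

lemma diagm_carrier[simp]: "diagm k d \<in> carrier_mat k k" unfolding diagm_def by simp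

lemma mult_entry:
  assumes "A \<in> carrier_mat a b" "B \<in> carrier_mat b c" "i < a" "j < c"
  shows "(A * B) $$ (i,j) = (\<Sum>x\<in>{0..<b}. A $$ (i,x) * B $$ (x,j))"
  using assms by (simp add: scalar_prod_def)

lemma diag_left:
  assumes A: "A \<in> carrier_mat k l" and i: "i < k" and j: "j < l"
  shows "(diagm k d * A) $$ (i,j) = d i * A $$ (i,j)"
proof -
  have "(diagm k d * A) $$ (i,j) = (\<Sum>x\<in>{0..<k}. (if i = x then d i else 0) * A $$ (x, j))"
    using A i j by (simp add: diagm_def scalar_prod_def)
  also have "\<dots> = (\<Sum>x\<in>{0..<k}. if x = i then d i * A $$ (i, j) else 0)"
    by (rule sum.cong) auto
  also have "\<dots> = d i * A $$ (i,j)" using i by simp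
  finally show ?thesis .
qed

lemma diag_right:
  assumes A: "A \<in> carrier_mat l k" and i: "i < l" and j: "j < k"
  shows "(A * diagm k d) $$ (i,j) = A $$ (i,j) * d j"
proof -
  have "(A * diagm k d) $$ (i,j) = (\<Sum>x\<in>{0..<k}. A $$ (i, x) * (if x = j then d x else 0))"
    using A i j by (simp add: diagm_def scalar_prod_def)
  also have "\<dots> = (\<Sum>x\<in>{0..<k}. if x = j then A $$ (i, j) * d j else 0)"
    by (rule sum.cong) auto
  also have "\<dots> = A $$ (i,j) * d j" using j by simp
  finally show ?thesis .
qed

lemma sqrt_weight_diag: "sqrt_weight_mat es w = diagm (length es) (\<lambda>e. sqrt (w (es ! e)))"
  unfolding sqrt_weight_mat_def weight_mat_def diagm_def by (rule eq_matI) auto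

lemma K_entry:
  assumes wd: "wdigraph n es w" and e: "e < length es" and f: "f < length es"
  shows "((sqrt_weight_mat es w * tgt_mat n es) * (transpose_mat (src_mat n es) * sqrt_weight_mat es w)) $$ (e,f)
    = (if snd (es ! e) = fst (es ! f) then sqrt (w (es!e)) * sqrt (w (es!f)) else 0)"
proof -
  let ?m = "length es"
  have R: "tgt_mat n es \<in> carrier_mat ?m n" and L: "transpose_mat (src_mat n es) \<in> carrier_mat n ?m"
    by (auto simp: tgt_mat_def src_mat_def)
  have Sq: "sqrt_weight_mat es w \<in> carrier_mat ?m ?m" by (simp add: sqrt_weight_diag)
  have tn: "snd (es ! e) < n" using wd e unfolding wdigraph_def by (auto dest!: nth_mem)
  have "((sqrt_weight_mat es w * tgt_mat n es) * (transpose_mat (src_mat n es) * sqrt_weight_mat es w)) $$ (e,f)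
     = (\<Sum>j\<in>{0..<n}. (sqrt_weight_mat es w * tgt_mat n es) $$ (e,j) * (transpose_mat (src_mat n es) * sqrt_weight_mat es w) $$ (j,f))"
    by (rule mult_entry[OF mult_carrier_mat[OF Sq R] mult_carrier_mat[OF L Sq] e f])
  also have "\<dots> = (\<Sum>j\<in>{0..<n}. if j = snd (es ! e) then (if snd (es ! e) = fst (es ! f) then sqrt (w (es!e)) * sqrt (w (es!f)) else 0) else 0)"
  proof (rule sum.cong[OF refl])
    fix j assume "j \<in> {0..<n}"
    then have j: "j < n" by simp
    show "(sqrt_weight_mat es w * tgt_mat n es) $$ (e,j) * (transpose_mat (src_mat n es) * sqrt_weight_mat es w) $$ (j,f)
      = (if j = snd (es ! e) then (if snd (es ! e) = fst (es ! f) then sqrt (w (es!e)) * sqrt (w (es!f)) else 0) else 0)"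
      unfolding sqrt_weight_diag diag_left[OF R e j] diag_right[OF L j f]
      using e f j by (auto simp: tgt_mat_def src_mat_def)
  qed
  also have "\<dots> = (if snd (es ! e) = fst (es ! f) then sqrt (w (es!e)) * sqrt (w (es!f)) else 0)"
    using tn by simp
  finally show ?thesis .
qed


lemma unip_mult:
  fixes N :: "real mat"
  assumes N: "N \<in> carrier_mat k k" and NN: "N * N = 0\<^sub>m k k"
  shows "(1\<^sub>m k + a \<cdot>\<^sub>m N) * (1\<^sub>m k + b \<cdot>\<^sub>m N) = 1\<^sub>m k + (a + b) \<cdot>\<^sub>m N"
proof -
  have Z0: "(a \<cdot>\<^sub>m N) * (b \<cdot>\<^sub>m N) = 0\<^sub>m k k"
    using N NN
    by (simp add: mult_smult_assoc_mat[OF N, of _ k] mult_smult_distrib[OF N N])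
  have "(1\<^sub>m k + a \<cdot>\<^sub>m N) * (1\<^sub>m k + b \<cdot>\<^sub>m N) = (1\<^sub>m k + b \<cdot>\<^sub>m N) + ((a \<cdot>\<^sub>m N) + 0\<^sub>m k k)"
  proof -
    have c1: "1\<^sub>m k \<in> carrier_mat k k" and c2: "a \<cdot>\<^sub>m N \<in> carrier_mat k k"
      and c3: "b \<cdot>\<^sub>m N \<in> carrier_mat k k" using N by auto
    have "(1\<^sub>m k + a \<cdot>\<^sub>m N) * (1\<^sub>m k + b \<cdot>\<^sub>m N) = 1\<^sub>m k * (1\<^sub>m k + b \<cdot>\<^sub>m N) + (a \<cdot>\<^sub>m N) * (1\<^sub>m k + b \<cdot>\<^sub>m N)"
      by (rule add_mult_distrib_mat[OF c1 c2 add_carrier_mat[OF c3]])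
    also have "(a \<cdot>\<^sub>m N) * (1\<^sub>m k + b \<cdot>\<^sub>m N) = (a \<cdot>\<^sub>m N) * 1\<^sub>m k + (a \<cdot>\<^sub>m N) * (b \<cdot>\<^sub>m N)"
      by (rule mult_add_distrib_mat[OF c2 c1 c3])
    finally show ?thesis using Z0 c1 c2 c3 by (simp add: left_mult_one_mat[OF add_carrier_mat[OF c3]] right_mult_one_mat[OF c2])
  qed
  also have "\<dots> = 1\<^sub>m k + (a + b) \<cdot>\<^sub>m N"
    using N by (intro eq_matI) (auto simp: algebra_simps)
  finally show ?thesis .
qed

lemma det_unipotent:
  fixes N S :: "real mat"
  assumes N: "N \<in> carrier_mat k k" and S: "S \<in> carrier_mat k k"
    and NN: "N * N = 0\<^sub>m k k" and SS: "S * S = 1\<^sub>m k" and SNS: "S * N * S = - N"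
  shows "det (1\<^sub>m k + r \<cdot>\<^sub>m N) = 1"
proof -
  define g where "g r = det (1\<^sub>m k + r \<cdot>\<^sub>m N)" for r
  have gm: "g a * g b = g (a + b)" for a b
    unfolding g_def using N
    by (subst det_mult[symmetric, of _ k]) (auto simp: unip_mult[OF N NN])
  have "1\<^sub>m k + 0 \<cdot>\<^sub>m N = 1\<^sub>m k" using N by (intro eq_matI) auto
  then have g0: "g 0 = 1" unfolding g_def by simp
  have "g r = g (r/2) * g (r/2)" using gm[of "r/2" "r/2"] by simp
  then have gpos: "g r \<ge> 0" by simp
  have "S * (1\<^sub>m k + r \<cdot>\<^sub>m N) * S = 1\<^sub>m k + (-r) \<cdot>\<^sub>m N"
  proof -
    have "S * (1\<^sub>m k + r \<cdot>\<^sub>m N) * S = (S + r \<cdot>\<^sub>m (S * N)) * S"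
      using N S by (simp add: mult_add_distrib_mat[OF S one_carrier_mat smult_carrier_mat[OF N]] mult_smult_distrib[OF S N])
    also have "\<dots> = S * S + r \<cdot>\<^sub>m (S * N * S)"
      using N S by (simp add: add_mult_distrib_mat[OF S smult_carrier_mat[OF mult_carrier_mat[OF S N]] S] mult_smult_assoc_mat[OF mult_carrier_mat[OF S N] S])
    also have "\<dots> = 1\<^sub>m k + (-r) \<cdot>\<^sub>m N"
      using SS SNS N by (intro eq_matI) auto
    finally show ?thesis .
  qed
  then have "det S * g r * det S = g (-r)"
    unfolding g_def using N S
    by (metis add_carrier_mat det_mult mult_carrier_mat one_carrier_mat smult_carrier_mat)
  moreover have "det S * det S = 1" using det_mult[OF S S] SS by simp
  ultimately have "g (-r) = g r" by (metis mult.commute mult.left_commute mult_1)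
  with gm[of r "-r"] g0 have "g r * g r = 1" by simp
  with gpos have "g r = 1"
    by (metis abs_of_nonneg abs_square_eq_1 power2_eq_square)
  then show ?thesis unfolding g_def .
qed


lemma factor3:
  fixes X Y :: "real mat"
  assumes X: "X \<in> carrier_mat k k" and Y: "Y \<in> carrier_mat k k"
    and XX: "X * X = 0\<^sub>m k k" and YY: "Y * Y = 0\<^sub>m k k"
  shows "(1\<^sub>m k - X) * (1\<^sub>m k + X + Y) * (1\<^sub>m k - Y) = 1\<^sub>m k - X * Y"
proof -
  have I: "1\<^sub>m k \<in> carrier_mat k k" by simp
  have M: "1\<^sub>m k + X + Y \<in> carrier_mat k k" using X Y by simp
  have XY: "X * Y \<in> carrier_mat k k" using X Y by simp
  have "X * (1\<^sub>m k + X + Y) = X * (1\<^sub>m k + X) + X * Y"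
    by (rule mult_add_distrib_mat[OF X _ Y]) (use X in simp)
  also have "X * (1\<^sub>m k + X) = X * 1\<^sub>m k + X * X"
    by (rule mult_add_distrib_mat[OF X I X])
  finally have XM: "X * (1\<^sub>m k + X + Y) = X + 0\<^sub>m k k + X * Y" using X XX by simp
  have "(1\<^sub>m k - X) * (1\<^sub>m k + X + Y) = 1\<^sub>m k * (1\<^sub>m k + X + Y) - X * (1\<^sub>m k + X + Y)"
    by (rule minus_mult_distrib_mat[OF I X M])
  also have "\<dots> = 1\<^sub>m k + Y - X * Y"
    unfolding XM left_mult_one_mat[OF M] using X Y XY by (intro eq_matI) auto
  finally have S1: "(1\<^sub>m k - X) * (1\<^sub>m k + X + Y) = 1\<^sub>m k + Y - X * Y" .
  have M2: "1\<^sub>m k + Y - X * Y \<in> carrier_mat k k" using minus_carrier_mat[OF XY] by simp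
  have "(1\<^sub>m k + Y - X * Y) * Y = (1\<^sub>m k + Y) * Y - (X * Y) * Y"
    by (rule minus_mult_distrib_mat[OF _ XY Y]) (use Y in simp)
  also have "(1\<^sub>m k + Y) * Y = 1\<^sub>m k * Y + Y * Y"
    by (rule add_mult_distrib_mat[OF I Y Y])
  also have "(X * Y) * Y = X * (Y * Y)" using X Y by simp
  finally have M2Y: "(1\<^sub>m k + Y - X * Y) * Y = Y + 0\<^sub>m k k - 0\<^sub>m k k"
    using X Y YY by simp
  have "(1\<^sub>m k + Y - X * Y) * (1\<^sub>m k - Y) = (1\<^sub>m k + Y - X * Y) * 1\<^sub>m k - (1\<^sub>m k + Y - X * Y) * Y"
    by (rule mult_minus_distrib_mat[OF M2 I Y])
  also have "\<dots> = 1\<^sub>m k - X * Y"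
    unfolding M2Y right_mult_one_mat[OF M2] using X Y XY by (intro eq_matI) auto
  finally show ?thesis unfolding S1 .
qed

definition Nm :: "(nat \<times> nat) list \<Rightarrow> (nat \<times> nat \<Rightarrow> real) \<Rightarrow> real mat" where
  "Nm es w = mat (length es) (length es) (\<lambda>(a,b).
     if es ! b = (snd (es ! a), fst (es ! a)) \<and> snd (es ! a) < fst (es ! a)
     then sqrt (w (es ! a) * w (es ! b)) else 0)"

definition Sm :: "(nat \<times> nat) list \<Rightarrow> real mat" where
  "Sm es = diagm (length es) (\<lambda>a. if fst (es ! a) < snd (es ! a) then 1 else -1)"

lemma Nm_carrier[simp]: "Nm es w \<in> carrier_mat (length es) (length es)"
  unfolding Nm_def by simp

lemma Nm_dims[simp]: "dim_row (Nm es w) = length es" "dim_col (Nm es w) = length es"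
  unfolding Nm_def by auto

lemma Sm_dims[simp]: "dim_row (Sm es) = length es" "dim_col (Sm es) = length es"
  unfolding Sm_def by auto

lemma Sm_carrier[simp]: "Sm es \<in> carrier_mat (length es) (length es)"
  unfolding Sm_def by simp

lemma loopless_nth: "loopless es \<Longrightarrow> a < length es \<Longrightarrow> fst (es ! a) \<noteq> snd (es ! a)"
  unfolding loopless_def by (metis (mono_tags, lifting) case_prodD nth_mem prod.collapse)

lemma NN_zero: "Nm es w * Nm es w = 0\<^sub>m (length es) (length es)"
proof (rule eq_matI)
  fix i j assume i: "i < dim_row (0\<^sub>m (length es) (length es))" and j: "j < dim_col (0\<^sub>m (length es) (length es))"
  then have "(Nm es w * Nm es w) $$ (i,j) = (\<Sum>x\<in>{0..<length es}. Nm es w $$ (i,x) * Nm es w $$ (x,j))"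
    by (intro mult_entry[of _ _ "length es"]) auto
  also have "\<dots> = 0"
    by (rule sum.neutral) (use i j in \<open>auto simp: Nm_def\<close>)
  finally show "(Nm es w * Nm es w) $$ (i,j) = 0\<^sub>m (length es) (length es) $$ (i,j)" using i j by simp
qed auto

lemma NtNt_zero: "transpose_mat (Nm es w) * transpose_mat (Nm es w) = 0\<^sub>m (length es) (length es)"
  by (subst transpose_mult[symmetric, of _ "length es" "length es" _ "length es"]) (auto simp: NN_zero)

lemma SS_one: "Sm es * Sm es = 1\<^sub>m (length es)"
proof (rule eq_matI)
  fix i j assume "i < dim_row (1\<^sub>m (length es))" "j < dim_col (1\<^sub>m (length es))"
  then have i: "i < length es" and j: "j < length es" by auto
  show "(Sm es * Sm es) $$ (i,j) = 1\<^sub>m (length es) $$ (i,j)"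
    unfolding Sm_def diag_left[OF diagm_carrier i j] using i j by auto
qed (auto simp: Sm_def)

lemma sign_N:
  assumes "i < length es" "j < length es"
  shows "(if fst (es ! i) < snd (es ! i) then 1 else -1) * Nm es w $$ (i,j) * (if fst (es ! j) < snd (es ! j) then 1 else -1) = - Nm es w $$ (i,j)"
  using assms by (auto simp: Nm_def)

lemma SNS: "Sm es * Nm es w * Sm es = - Nm es w"
proof (rule eq_matI)
  fix i j assume "i < dim_row (- Nm es w)" "j < dim_col (- Nm es w)"
  then have i: "i < length es" and j: "j < length es" by auto
  show "(Sm es * Nm es w * Sm es) $$ (i,j) = (- Nm es w) $$ (i,j)"
    unfolding Sm_def diag_right[OF mult_carrier_mat[OF diagm_carrier Nm_carrier] i j]
      diag_left[OF Nm_carrier i j]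
    using sign_N[OF i j, of w] i j by simp
qed auto

lemma SNtS: "Sm es * transpose_mat (Nm es w) * Sm es = - transpose_mat (Nm es w)"
proof (rule eq_matI)
  fix i j assume "i < dim_row (- transpose_mat (Nm es w))" "j < dim_col (- transpose_mat (Nm es w))"
  then have i: "i < length es" and j: "j < length es" by auto
  have Nt: "transpose_mat (Nm es w) \<in> carrier_mat (length es) (length es)" by simp
  show "(Sm es * transpose_mat (Nm es w) * Sm es) $$ (i,j) = (- transpose_mat (Nm es w)) $$ (i,j)"
    unfolding Sm_def diag_right[OF mult_carrier_mat[OF diagm_carrier Nt] i j]
      diag_left[OF Nt i j]
    using i j by (auto simp: Nm_def)
qed auto

lemma smult_sq_zero:
  fixes N :: "real mat"
  assumes N: "N \<in> carrier_mat k k" and NN: "N * N = 0\<^sub>m k k"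
  shows "(c \<cdot>\<^sub>m N) * (c \<cdot>\<^sub>m N) = 0\<^sub>m k k"
  using N NN by (simp add: mult_smult_assoc_mat[OF N, of _ k] mult_smult_distrib[OF N N])

lemma det_one_minus_N:
  assumes N: "N \<in> carrier_mat k k" and S: "S \<in> carrier_mat k k"
    and NN: "N * N = 0\<^sub>m k k" and SS: "S * S = 1\<^sub>m k" and SNS: "S * N * S = - N"
  shows "det (1\<^sub>m k - t \<cdot>\<^sub>m N) = (1::real)"
proof -
  have "1\<^sub>m k - t \<cdot>\<^sub>m N = 1\<^sub>m k + (-t) \<cdot>\<^sub>m N" using N by (intro eq_matI) auto
  then show ?thesis using det_unipotent[OF N S NN SS SNS] by simp
qed


lemma det_diagm: "det (diagm k d) = (\<Prod>a\<in>{0..<k}. d a)"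
proof -
  have "upper_triangular (diagm k d)" unfolding upper_triangular_def by auto
  then have "det (diagm k d) = prod_list (diag_mat (diagm k d))"
    by (rule det_upper_triangular[OF _ diagm_carrier])
  also have "\<dots> = (\<Prod>a\<in>{0..<k}. d a)" unfolding prod_list_diag_prod by simp
  finally show ?thesis .
qed

lemma wd_pos: "wdigraph n es w \<Longrightarrow> a < length es \<Longrightarrow> w (es ! a) > 0"
  unfolding wdigraph_def by auto

lemma wd_pos': "wdigraph n es w \<Longrightarrow> p \<in> set es \<Longrightarrow> w p > 0"
  unfolding wdigraph_def by auto

lemma wd_distinct: "wdigraph n es w \<Longrightarrow> a < length es \<Longrightarrow> b < length es \<Longrightarrow> es ! a = es ! b \<Longrightarrow> a = b"
  unfolding wdigraph_def using nth_eq_iff_index_eq by blast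

lemma KV_entry:
  assumes wd: "wdigraph n es w" and ll: "loopless es" and i: "i < length es" and j: "j < length es"
  shows "(if snd (es ! i) = fst (es ! j) then sqrt (w (es!i)) * sqrt (w (es!j)) else 0)
    - nb_mat es w $$ (i,j) = Nm es w $$ (i,j) + Nm es w $$ (j,i)"
proof -
  have li: "fst (es ! i) \<noteq> snd (es ! i)" and lj: "fst (es ! j) \<noteq> snd (es ! j)"
    using loopless_nth[OF ll i] loopless_nth[OF ll j] by auto
  have eq1: "(es ! j = (snd (es ! i), fst (es ! i))) = (snd (es ! i) = fst (es ! j) \<and> snd (es ! j) = fst (es ! i))"
    by (metis fst_conv prod.collapse snd_conv)
  have eq2: "(es ! i = (snd (es ! j), fst (es ! j))) = (snd (es ! i) = fst (es ! j) \<and> snd (es ! j) = fst (es ! i))"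
    by (metis fst_conv prod.collapse snd_conv)
  define s where "s = sqrt (w (es ! i) * w (es ! j))"
  have s1: "sqrt (w (es!i)) * sqrt (w (es!j)) = s" unfolding s_def by (simp add: real_sqrt_mult)
  have s2: "sqrt (w (es!j) * w (es!i)) = s" unfolding s_def by (simp add: mult.commute)
  have V: "nb_mat es w $$ (i,j) = (if snd (es ! i) = fst (es ! j) \<and> snd (es ! j) \<noteq> fst (es ! i) then s else 0)"
    unfolding nb_mat_def s_def using i j by simp
  have N1: "Nm es w $$ (i,j) = (if snd (es ! i) = fst (es ! j) \<and> snd (es ! j) = fst (es ! i) \<and> snd (es ! i) < fst (es ! i) then s else 0)"
    unfolding Nm_def s_def using i j eq1 by simp
  have N2: "Nm es w $$ (j,i) = (if snd (es ! i) = fst (es ! j) \<and> snd (es ! j) = fst (es ! i) \<and> snd (es ! j) < fst (es ! j) then s else 0)"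
    unfolding Nm_def using i j eq2 s2 by simp
  show ?thesis unfolding V N1 N2 s1 using li lj by auto
qed

lemma D_entry:
  assumes wd: "wdigraph n es w" and a: "a < length es" and c: "c < length es"
  shows "((t \<cdot>\<^sub>m Nm es w) * (t \<cdot>\<^sub>m transpose_mat (Nm es w))) $$ (a,c)
    = (if a = c then t^2 * (if snd (es ! a) < fst (es ! a) \<and> (snd (es ! a), fst (es ! a)) \<in> set es
         then w (es ! a) * w (snd (es ! a), fst (es ! a)) else 0) else 0)"
proof -
  let ?m = "length es"
  let ?N = "Nm es w"
  have "((t \<cdot>\<^sub>m ?N) * (t \<cdot>\<^sub>m transpose_mat ?N)) $$ (a,c) = (\<Sum>b\<in>{0..<?m}. (t * ?N $$ (a,b)) * (t * ?N $$ (c,b)))"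
  proof -
    have C1: "t \<cdot>\<^sub>m ?N \<in> carrier_mat ?m ?m" and C2: "t \<cdot>\<^sub>m transpose_mat ?N \<in> carrier_mat ?m ?m" by auto
    show ?thesis unfolding mult_entry[OF C1 C2 a c]
      by (rule sum.cong[OF refl]) (use a c in simp)
  qed
  also have "\<dots> = (if a = c then t^2 * (if snd (es ! a) < fst (es ! a) \<and> (snd (es ! a), fst (es ! a)) \<in> set es
         then w (es ! a) * w (snd (es ! a), fst (es ! a)) else 0) else 0)"
  proof (cases "snd (es ! a) < fst (es ! a) \<and> (snd (es ! a), fst (es ! a)) \<in> set es")
    case True
    then obtain b0 where b0: "b0 < ?m" "es ! b0 = (snd (es ! a), fst (es ! a))"
      by (metis in_set_conv_nth)
    have Nab: "?N $$ (a,b) = (if b = b0 then sqrt (w (es ! a) * w (es ! b0)) else 0)" if "b < ?m" for b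
    proof -
      have "(es ! b = (snd (es ! a), fst (es ! a))) = (b = b0)"
        using wd_distinct[OF wd that b0(1)] b0(2) by auto
      then show ?thesis using that a True unfolding Nm_def by simp
    qed
    have Ncb0: "?N $$ (c,b0) = (if c = a then sqrt (w (es ! a) * w (es ! b0)) else 0)"
    proof -
      have "es ! b0 = (snd (es ! c), fst (es ! c)) \<Longrightarrow> c = a"
        using b0 wd_distinct[OF wd a c] by (metis fst_conv prod.collapse snd_conv)
      then have "(es ! b0 = (snd (es ! c), fst (es ! c)) \<and> snd (es ! c) < fst (es ! c)) = (c = a)"
        using b0 True by auto
      then show ?thesis using c b0 a unfolding Nm_def by simp
    qed
    have "(\<Sum>b\<in>{0..<?m}. (t * ?N $$ (a,b)) * (t * ?N $$ (c,b)))
        = (\<Sum>b\<in>{0..<?m}. if b = b0 then (t * sqrt (w (es ! a) * w (es ! b0))) * (t * ?N $$ (c,b0)) else 0)"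
      by (rule sum.cong) (auto simp: Nab)
    also have "\<dots> = (t * sqrt (w (es ! a) * w (es ! b0))) * (t * ?N $$ (c,b0))" using b0 by simp
    also have "\<dots> = (if a = c then t^2 * (w (es ! a) * w (es ! b0)) else 0)"
    proof -
      have "0 \<le> w (es ! a) * w (es ! b0)" using wd_pos[OF wd a] wd_pos[OF wd b0(1)] by simp
      then show ?thesis unfolding Ncb0 by (auto simp: power2_eq_square)
    qed
    finally show ?thesis using True by (simp only: b0(2) if_True simp_thms)
  next
    case False
    have "?N $$ (a,b) = 0" if "b < ?m" for b
    proof -
      have "\<not> (es ! b = (snd (es ! a), fst (es ! a)) \<and> snd (es ! a) < fst (es ! a))"
        using False nth_mem[OF that] by metis
      then show ?thesis using that a unfolding Nm_def by (simp, blast)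
    qed
    then have "(\<Sum>b\<in>{0..<?m}. (t * ?N $$ (a,b)) * (t * ?N $$ (c,b))) = 0"
      by (intro sum.neutral) auto
    then show ?thesis by (simp only: if_not_P[OF False] mult_zero_right if_cancel)
  qed
  finally show ?thesis .
qed


lemma prod_recip:
  assumes wd: "wdigraph n es w"
  shows "(\<Prod>a\<in>{0..<length es}. 1 - t^2 * (if snd (es ! a) < fst (es ! a) \<and> (snd (es ! a), fst (es ! a)) \<in> set es
         then w (es ! a) * w (snd (es ! a), fst (es ! a)) else 0))
    = (\<Prod>(u,v)\<in>recip_pairs es. 1 - t\<^sup>2 * w (u,v) * w (v,u))"
proof -
  define A where "A = {a\<in>{0..<length es}. snd (es ! a) < fst (es ! a) \<and> (snd (es ! a), fst (es ! a)) \<in> set es}"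
  define g where "g a = (snd (es ! a), fst (es ! a))" for a
  have inj: "inj_on g A"
  proof (rule inj_onI)
    fix a b assume "a \<in> A" "b \<in> A" "g a = g b"
    then have "es ! a = es ! b" unfolding g_def by (simp add: prod_eq_iff)
    then show "a = b" using wd_distinct[OF wd, of a b] \<open>a \<in> A\<close> \<open>b \<in> A\<close> unfolding A_def by simp
  qed
  have img: "g ` A = recip_pairs es"
  proof
    show "g ` A \<subseteq> recip_pairs es"
      unfolding A_def g_def recip_pairs_def by (auto simp: nth_mem)
    show "recip_pairs es \<subseteq> g ` A"
    proof
      fix p assume "p \<in> recip_pairs es"
      then obtain u v where p: "p = (u,v)" "(u,v) \<in> set es" "(v,u) \<in> set es" "u < v"
        unfolding recip_pairs_def by auto
      then obtain a where a: "a < length es" "es ! a = (v,u)" by (metis in_set_conv_nth)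
      then have "a \<in> A" unfolding A_def using p by auto
      moreover have "p = g a" unfolding g_def using a p by simp
      ultimately show "p \<in> g ` A" by blast
    qed
  qed
  have "(\<Prod>a\<in>{0..<length es}. 1 - t^2 * (if snd (es ! a) < fst (es ! a) \<and> (snd (es ! a), fst (es ! a)) \<in> set es
         then w (es ! a) * w (snd (es ! a), fst (es ! a)) else 0))
      = (\<Prod>a\<in>A. 1 - t^2 * (w (es ! a) * w (snd (es ! a), fst (es ! a))))"
    by (rule prod.mono_neutral_cong_right) (auto simp: A_def)
  also have "\<dots> = (\<Prod>a\<in>A. (\<lambda>(u,v). 1 - t\<^sup>2 * w (u,v) * w (v,u)) (g a))"
  proof (rule prod.cong[OF refl])
    fix a assume "a \<in> A"
    have "w (fst (es ! a), snd (es ! a)) = w (es ! a)" by simp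
    then show "1 - t^2 * (w (es ! a) * w (snd (es ! a), fst (es ! a))) = (\<lambda>(u,v). 1 - t\<^sup>2 * w (u,v) * w (v,u)) (g a)"
      unfolding g_def by (simp add: algebra_simps)
  qed
  also have "\<dots> = (\<Prod>(u,v)\<in>g ` A. 1 - t\<^sup>2 * w (u,v) * w (v,u))"
    by (rule prod.reindex[OF inj, symmetric, unfolded comp_def])
  finally show ?thesis unfolding img .
qed



theorem theorem5p6:
  fixes n :: nat and es :: "(nat \<times> nat) list" and w :: "nat \<times> nat \<Rightarrow> real" and t :: real
  assumes "wdigraph n es w" and "loopless es"
    and "det (1\<^sub>m (length es) - t \<cdot>\<^sub>m nb_mat es w) \<noteq> 0"
  shows "det (Phi_mat n es w t) =
    (\<Prod>(u,v)\<in>recip_pairs es. 1 - t\<^sup>2 * w (u,v) * w (v,u)) / det (1\<^sub>m (length es) - t \<cdot>\<^sub>m nb_mat es w)"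
proof -
  note wd = assms(1) and ll = assms(2)
  define m where "m = length es"
  define L where "L = transpose_mat (src_mat n es)"
  define R where "R = tgt_mat n es"
  define Sq where "Sq = sqrt_weight_mat es w"
  define V where "V = nb_mat es w"
  define X where "X = 1\<^sub>m m - t \<cdot>\<^sub>m V"
  define N where "N = Nm es w"
  define P where "P = (\<Prod>(u,v)\<in>recip_pairs es. 1 - t\<^sup>2 * w (u,v) * w (v,u))"
  have Lc: "L \<in> carrier_mat n m" unfolding L_def m_def src_mat_def by simp
  have Rc: "R \<in> carrier_mat m n" unfolding R_def m_def tgt_mat_def by simp
  have Sqc: "Sq \<in> carrier_mat m m" unfolding Sq_def m_def sqrt_weight_diag by simp
  have Vc: "V \<in> carrier_mat m m" unfolding V_def m_def nb_mat_def by simp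
  have Xc: "X \<in> carrier_mat m m" unfolding X_def using Vc by (simp add: minus_carrier_mat)
  have Nc: "N \<in> carrier_mat m m" unfolding N_def m_def by simp
  have Ntc: "transpose_mat N \<in> carrier_mat m m" using Nc by simp
  have detX: "det X \<noteq> 0" using assms(3) unfolding X_def V_def m_def .
  obtain Xi where Xi: "mat_inverse X = Some Xi"
  proof (cases "mat_inverse X")
    case None
    from mat_inverse(1)[OF Xc None, of "()"] det_non_zero_imp_unit[OF Xc detX, of "()"]
    show ?thesis by simp
  next
    case (Some Y) then show ?thesis using that by simp
  qed
  from mat_inverse(2)[OF Xc Xi] have XXi: "X * Xi = 1\<^sub>m m" and Xic: "Xi \<in> carrier_mat m m" by auto
  define C where "C = L * Sq * Xi"
  define B where "B = Sq * R"
  define K where "K = B * (L * Sq)"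
  have Cc: "C \<in> carrier_mat n m" unfolding C_def using Lc Sqc Xic by (metis mult_carrier_mat)
  have Bc: "B \<in> carrier_mat m n" unfolding B_def using Sqc Rc by (metis mult_carrier_mat)
  have LSqc: "L * Sq \<in> carrier_mat n m" using Lc Sqc by (metis mult_carrier_mat)
  have Kc: "K \<in> carrier_mat m m" unfolding K_def using Bc LSqc by (metis mult_carrier_mat)
  have "Phi_mat n es w t = 1\<^sub>m n + t \<cdot>\<^sub>m (C * Sq * R)"
    unfolding Phi_mat_def C_def L_def[symmetric] R_def[symmetric] Sq_def[symmetric] V_def[symmetric]
      m_def[symmetric] X_def[symmetric] Xi by simp
  also have "C * Sq * R = C * B" unfolding B_def by (rule assoc_mult_mat[OF Cc Sqc Rc])
  also have "t \<cdot>\<^sub>m (C * B) = (t \<cdot>\<^sub>m C) * B" by (rule mult_smult_assoc_mat[OF Cc Bc, symmetric])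
  finally have Phi: "Phi_mat n es w t = 1\<^sub>m n + (t \<cdot>\<^sub>m C) * B" .
  have "det (Phi_mat n es w t) = det (1\<^sub>m m + B * (t \<cdot>\<^sub>m C))"
    unfolding Phi by (rule sylvester_det) (use Cc Bc in auto)
  also have "B * (t \<cdot>\<^sub>m C) = t \<cdot>\<^sub>m (K * Xi)"
  proof -
    have "B * (t \<cdot>\<^sub>m C) = t \<cdot>\<^sub>m (B * C)" by (rule mult_smult_distrib[OF Bc Cc])
    also have "B * C = K * Xi" unfolding C_def K_def by (rule assoc_mult_mat[OF Bc LSqc Xic, symmetric])
    finally show ?thesis .
  qed
  also have "1\<^sub>m m + t \<cdot>\<^sub>m (K * Xi) = (X + t \<cdot>\<^sub>m K) * Xi"
  proof -
    have "(X + t \<cdot>\<^sub>m K) * Xi = X * Xi + (t \<cdot>\<^sub>m K) * Xi"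
      by (rule add_mult_distrib_mat[OF Xc _ Xic]) (use Kc in simp)
    also have "(t \<cdot>\<^sub>m K) * Xi = t \<cdot>\<^sub>m (K * Xi)" by (rule mult_smult_assoc_mat[OF Kc Xic])
    finally show ?thesis unfolding XXi by simp
  qed
  also have "det ((X + t \<cdot>\<^sub>m K) * Xi) = det (X + t \<cdot>\<^sub>m K) * det Xi"
    by (rule det_mult[OF _ Xic]) (use Xc Kc in simp)
  finally have step1: "det (Phi_mat n es w t) = det (X + t \<cdot>\<^sub>m K) * det Xi" .
  have dXi: "det X * det Xi = 1" using det_mult[OF Xc Xic] XXi by simp
  have J: "X + t \<cdot>\<^sub>m K = 1\<^sub>m m + t \<cdot>\<^sub>m N + t \<cdot>\<^sub>m transpose_mat N"
  proof (rule eq_matI)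
    fix i j assume "i < dim_row (1\<^sub>m m + t \<cdot>\<^sub>m N + t \<cdot>\<^sub>m transpose_mat N)"
      "j < dim_col (1\<^sub>m m + t \<cdot>\<^sub>m N + t \<cdot>\<^sub>m transpose_mat N)"
    then have i: "i < m" and j: "j < m" using Nc by auto
    have Ke: "K $$ (i,j) = (if snd (es ! i) = fst (es ! j) then sqrt (w (es!i)) * sqrt (w (es!j)) else 0)"
      unfolding K_def B_def L_def R_def Sq_def using K_entry[OF wd, of i j] i j m_def by simp
    have KV: "K $$ (i,j) - V $$ (i,j) = N $$ (i,j) + N $$ (j,i)"
      unfolding Ke V_def N_def using KV_entry[OF wd ll, of i j] i j m_def by simp
    show "(X + t \<cdot>\<^sub>m K) $$ (i,j) = (1\<^sub>m m + t \<cdot>\<^sub>m N + t \<cdot>\<^sub>m transpose_mat N) $$ (i,j)"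
      using i j Xc Kc Nc Vc KV unfolding X_def by (simp add: algebra_simps)
  qed (use Xc Kc Nc in auto)
  have NN: "N * N = 0\<^sub>m m m" unfolding N_def m_def by (rule NN_zero)
  have NtNt: "transpose_mat N * transpose_mat N = 0\<^sub>m m m" unfolding N_def m_def by (rule NtNt_zero)
  have tNc: "t \<cdot>\<^sub>m N \<in> carrier_mat m m" and tNtc: "t \<cdot>\<^sub>m transpose_mat N \<in> carrier_mat m m"
    using Nc by auto
  have F: "(1\<^sub>m m - t \<cdot>\<^sub>m N) * (1\<^sub>m m + t \<cdot>\<^sub>m N + t \<cdot>\<^sub>m transpose_mat N) * (1\<^sub>m m - t \<cdot>\<^sub>m transpose_mat N)
      = 1\<^sub>m m - (t \<cdot>\<^sub>m N) * (t \<cdot>\<^sub>m transpose_mat N)"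
    by (rule factor3[OF tNc tNtc smult_sq_zero[OF Nc NN] smult_sq_zero[OF Ntc NtNt]])
  have Sc: "Sm es \<in> carrier_mat m m" unfolding m_def by simp
  have d1: "det (1\<^sub>m m - t \<cdot>\<^sub>m N) = 1"
    by (rule det_one_minus_N[OF Nc Sc NN]) (simp_all add: N_def m_def SS_one SNS)
  have d2: "det (1\<^sub>m m - t \<cdot>\<^sub>m transpose_mat N) = 1"
    by (rule det_one_minus_N[OF Ntc Sc NtNt]) (simp_all add: N_def m_def SS_one SNtS)
  have M1c: "1\<^sub>m m - t \<cdot>\<^sub>m N \<in> carrier_mat m m" using tNc by (simp add: minus_carrier_mat)
  have M2c: "1\<^sub>m m + t \<cdot>\<^sub>m N + t \<cdot>\<^sub>m transpose_mat N \<in> carrier_mat m m" using Nc by simp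
  have M3c: "1\<^sub>m m - t \<cdot>\<^sub>m transpose_mat N \<in> carrier_mat m m" using tNtc by (simp add: minus_carrier_mat)
  have E1: "det (1\<^sub>m m - (t \<cdot>\<^sub>m N) * (t \<cdot>\<^sub>m transpose_mat N)) = det (1\<^sub>m m + t \<cdot>\<^sub>m N + t \<cdot>\<^sub>m transpose_mat N)"
    unfolding F[symmetric] det_mult[OF mult_carrier_mat[OF M1c M2c] M3c] det_mult[OF M1c M2c] d1 d2 by simp
  have E2: "1\<^sub>m m - (t \<cdot>\<^sub>m N) * (t \<cdot>\<^sub>m transpose_mat N) = diagm m (\<lambda>a. 1 - t^2 * (if snd (es ! a) < fst (es ! a) \<and> (snd (es ! a), fst (es ! a)) \<in> set es
         then w (es ! a) * w (snd (es ! a), fst (es ! a)) else 0))"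
  proof (rule eq_matI)
    fix i j assume "i < dim_row (diagm m (\<lambda>a. 1 - t^2 * (if snd (es ! a) < fst (es ! a) \<and> (snd (es ! a), fst (es ! a)) \<in> set es
         then w (es ! a) * w (snd (es ! a), fst (es ! a)) else 0)))"
      "j < dim_col (diagm m (\<lambda>a. 1 - t^2 * (if snd (es ! a) < fst (es ! a) \<and> (snd (es ! a), fst (es ! a)) \<in> set es
         then w (es ! a) * w (snd (es ! a), fst (es ! a)) else 0)))"
    then have i: "i < m" and j: "j < m" by auto
    have "((t \<cdot>\<^sub>m N) * (t \<cdot>\<^sub>m transpose_mat N)) $$ (i,j) = (if i = j then t^2 * (if snd (es ! i) < fst (es ! i) \<and> (snd (es ! i), fst (es ! i)) \<in> set es
         then w (es ! i) * w (snd (es ! i), fst (es ! i)) else 0) else 0)"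
      unfolding N_def using D_entry[OF wd, of i j t] i j m_def by simp
    then show "(1\<^sub>m m - (t \<cdot>\<^sub>m N) * (t \<cdot>\<^sub>m transpose_mat N)) $$ (i,j) = diagm m (\<lambda>a. 1 - t^2 * (if snd (es ! a) < fst (es ! a) \<and> (snd (es ! a), fst (es ! a)) \<in> set es
         then w (es ! a) * w (snd (es ! a), fst (es ! a)) else 0)) $$ (i,j)"
      using i j Nc by simp
  qed (use Nc in auto)
  have "det (X + t \<cdot>\<^sub>m K) = det (1\<^sub>m m - (t \<cdot>\<^sub>m N) * (t \<cdot>\<^sub>m transpose_mat N))"
    unfolding J E1 ..
  also have "\<dots> = P"
    unfolding E2 det_diagm unfolding P_def m_def by (rule prod_recip[OF wd])
  finally have dK: "det (X + t \<cdot>\<^sub>m K) = P" .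
  have "det (Phi_mat n es w t) = P * det Xi" unfolding step1 dK ..
  also have "\<dots> = P / det X"
  proof -
    have "det Xi * det X = 1" using dXi by (simp only: mult.commute)
    then have "det Xi = 1 / det X" by (rule eq_divide_imp[OF detX])
    then show ?thesis by simp
  qed
  finally show ?thesis unfolding P_def X_def V_def m_def .
qed

end
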